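(* Let $\mathcal{X}$ be a finite-dimensional Hilbert space, $\Phi,\Psi$ quantum channels on $\mathcal{L}(\mathcal{X})$, and $\sigma=|\psi\rangle\langle\psi|$ a pure state. Then $G_{\mathrm{ch}}(\Phi,\Psi;\sigma)=G(\Phi(\sigma),\Psi(\sigma))$.
   Context: Superfidelity: $G(\rho_1,\rho_2)=\operatorname{Tr}(\rho_1\rho_2)+\sqrt{1-\operatorname{Tr}\rho_1^2}\sqrt{1-\operatorname{Tr}\rho_2^2}$. Channel superfidelity: $G_{\mathrm{ch}}(\Phi,\Psi;\sigma)=\inf G\big((\Phi\otimes\mathbb{1}_{\mathcal{L}(\mathcal{Z})})(\xi),(\Psi\otimes\mathbb{1}_{\mathcal{L}(\mathcal{Z})})(\xi)\big)$ over all finite-dimensional $\mathcal{Z}$ and all pure states $\xi=|\zeta\rangle\langle\zeta|$ on $\mathcal{X}\otimes\mathcal{Z}$ with $\operatorname{Tr}_{\mathcal{Z}}\xi=\sigma$. *)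

theory Defs
  imports Complex_Main "Jordan_Normal_Form.Matrix"
begin

text \<open>Finite-dimensional Hilbert spaces are modelled as \<open>\<complex>^d\<close>; operators in
  \<open>L(\<complex>^d)\<close> are \<open>d \<times> d\<close> complex matrices (Jordan_Normal_Form).  The space
  \<open>X \<otimes> Z\<close> with \<open>dim X = n\<close>, \<open>dim Z = k\<close> is \<open>\<complex>^(n*k)\<close>, basis vector
  \<open>e_i \<otimes> f_a\<close> having index \<open>i*k + a\<close>.\<close>

definition mtrace :: "complex mat \<Rightarrow> complex" where
  "mtrace A = (\<Sum>i<dim_row A. A $$ (i, i))"

definition psd :: "nat \<Rightarrow> complex mat \<Rightarrow> bool" where
  "psd d A \<longleftrightarrow> A \<in> carrier_mat d d \<and>
     (\<forall>v \<in> carrier_vec d. Im (conjugate v \<bullet> (A *\<^sub>v v)) = 0 \<and> Re (conjugate v \<bullet> (A *\<^sub>v v)) \<ge> 0)"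

definition density :: "nat \<Rightarrow> complex mat \<Rightarrow> bool" where
  "density d \<rho> \<longleftrightarrow> psd d \<rho> \<and> mtrace \<rho> = 1"

definition unit_vector :: "nat \<Rightarrow> complex vec \<Rightarrow> bool" where
  "unit_vector d v \<longleftrightarrow> v \<in> carrier_vec d \<and> v \<bullet>c v = 1"

definition proj :: "complex vec \<Rightarrow> complex mat" where
  "proj v = mat (dim_vec v) (dim_vec v) (\<lambda>(i, j). v $ i * cnj (v $ j))"

text \<open>Block \<open>(a,b)\<close> of an operator on \<open>X \<otimes> Z\<close>: \<open>(1 \<otimes> \<langle>a|) \<xi> (1 \<otimes> |b\<rangle>)\<close>.\<close>
definition blk :: "nat \<Rightarrow> nat \<Rightarrow> complex mat \<Rightarrow> nat \<Rightarrow> nat \<Rightarrow> complex mat" where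
  "blk n k \<xi> a b = mat n n (\<lambda>(i, j). \<xi> $$ (i * k + a, j * k + b))"

text \<open>\<open>(\<Phi> \<otimes> 1_{L(Z)})(\<xi>)\<close> for a linear map \<open>\<Phi>\<close> on \<open>L(\<complex>^n)\<close>, \<open>dim Z = k\<close>:
  \<open>\<Sum>_{a,b} \<Phi>(\<xi>_{ab}) \<otimes> |a\<rangle>\<langle>b|\<close>.\<close>
definition tensor_id :: "nat \<Rightarrow> nat \<Rightarrow> (complex mat \<Rightarrow> complex mat) \<Rightarrow> complex mat \<Rightarrow> complex mat" where
  "tensor_id n k \<Phi> \<xi> = mat (n * k) (n * k)
     (\<lambda>(p, q). \<Phi> (blk n k \<xi> (p mod k) (q mod k)) $$ (p div k, q div k))"

definition ptrace_Z :: "nat \<Rightarrow> nat \<Rightarrow> complex mat \<Rightarrow> complex mat" where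
  "ptrace_Z n k \<xi> = mat n n (\<lambda>(i, j). \<Sum>a<k. \<xi> $$ (i * k + a, j * k + a))"

definition linear_map_on :: "nat \<Rightarrow> (complex mat \<Rightarrow> complex mat) \<Rightarrow> bool" where
  "linear_map_on n \<Phi> \<longleftrightarrow>
     (\<forall>A \<in> carrier_mat n n. \<Phi> A \<in> carrier_mat n n) \<and>
     (\<forall>A \<in> carrier_mat n n. \<forall>B \<in> carrier_mat n n. \<Phi> (A + B) = \<Phi> A + \<Phi> B) \<and>
     (\<forall>A \<in> carrier_mat n n. \<forall>c. \<Phi> (c \<cdot>\<^sub>m A) = c \<cdot>\<^sub>m \<Phi> A)"

definition completely_positive :: "nat \<Rightarrow> (complex mat \<Rightarrow> complex mat) \<Rightarrow> bool" where
  "completely_positive n \<Phi> \<longleftrightarrow>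
     (\<forall>k. \<forall>\<xi>. psd (n * k) \<xi> \<longrightarrow> psd (n * k) (tensor_id n k \<Phi> \<xi>))"

definition trace_preserving :: "nat \<Rightarrow> (complex mat \<Rightarrow> complex mat) \<Rightarrow> bool" where
  "trace_preserving n \<Phi> \<longleftrightarrow> (\<forall>A \<in> carrier_mat n n. mtrace (\<Phi> A) = mtrace A)"

definition quantum_channel :: "nat \<Rightarrow> (complex mat \<Rightarrow> complex mat) \<Rightarrow> bool" where
  "quantum_channel n \<Phi> \<longleftrightarrow> linear_map_on n \<Phi> \<and> completely_positive n \<Phi> \<and> trace_preserving n \<Phi>"

text \<open>Superfidelity (traces of products of density operators are real; we take real parts).\<close>
definition superfidelity :: "complex mat \<Rightarrow> complex mat \<Rightarrow> real" where
  "superfidelity \<rho>1 \<rho>2 = Re (mtrace (\<rho>1 * \<rho>2))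
     + sqrt (1 - Re (mtrace (\<rho>1 * \<rho>1))) * sqrt (1 - Re (mtrace (\<rho>2 * \<rho>2)))"

definition channel_superfidelity ::
  "nat \<Rightarrow> (complex mat \<Rightarrow> complex mat) \<Rightarrow> (complex mat \<Rightarrow> complex mat) \<Rightarrow> complex mat \<Rightarrow> real" where
  "channel_superfidelity n \<Phi> \<Psi> \<sigma> =
     (INF (k, \<zeta>) \<in> {(k, \<zeta>). unit_vector (n * k) \<zeta> \<and> ptrace_Z n k (proj \<zeta>) = \<sigma>}.
        superfidelity (tensor_id n k \<Phi> (proj \<zeta>)) (tensor_id n k \<Psi> (proj \<zeta>)))"

end

theory Submission
  imports Defs
begin

lemma sum_split_nk: "(\<Sum>p<n*k. (g::nat \<Rightarrow> 'a::comm_monoid_add) p) = (\<Sum>i<n. \<Sum>a<k. g (i*k+a))"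
proof -
  have "(\<Sum>p<n*k. g p) = (\<Sum>i<n. sum g {i*k..<i*k+k})" using sum.nat_group[of g k n] by simp
  also have "\<dots> = (\<Sum>i<n. \<Sum>a<k. g (i*k+a))"
  proof (rule sum.cong[OF refl])
    fix i
    have "sum g {0+i*k..<k+i*k} = (\<Sum>a=0..<k. g (a + i*k))" by (rule sum.shift_bounds_nat_ivl)
    then show "sum g {i*k..<i*k+k} = (\<Sum>a<k. g (i*k+a))" by (simp add: add.commute atLeast0LessThan)
  qed
  finally show ?thesis .
qed

lemma cnorm0: "(\<Sum>a<(k::nat). (z a :: complex) * cnj (z a)) = 0 \<Longrightarrow> a < k \<Longrightarrow> z a = 0"
proof -
  assume s: "(\<Sum>a<k. z a * cnj (z a)) = 0" and a: "a < k"
  have "(\<Sum>a<k. z a * cnj (z a)) = complex_of_real (\<Sum>a<k. (cmod (z a))\<^sup>2)"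
    by (simp only: of_real_sum complex_norm_square)
  with s have "(\<Sum>a<k. (cmod (z a))\<^sup>2) = 0" by (metis of_real_eq_0_iff)
  then have "\<forall>a\<in>{..<k}. (cmod (z a))\<^sup>2 = 0"
    using sum_nonneg_eq_0_iff[of "{..<k}" "\<lambda>a. (cmod (z a))\<^sup>2"] by simp
  with a show "z a = 0" by auto
qed

lemma factor:
  fixes M :: "nat \<Rightarrow> nat \<Rightarrow> complex" and \<psi> :: "nat \<Rightarrow> complex" and k n :: nat
  assumes unit: "(\<Sum>i<n. \<psi> i * cnj (\<psi> i)) = 1"
    and pt: "\<And>i j. i<n \<Longrightarrow> j<n \<Longrightarrow> (\<Sum>a<k. M i a * cnj (M j a)) = \<psi> i * cnj (\<psi> j)"
    and phi: "\<And>a. \<phi> a = (\<Sum>j<n. cnj (\<psi> j) * M j a)"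
  shows "\<And>i a. i<n \<Longrightarrow> a<k \<Longrightarrow> M i a = \<psi> i * \<phi> a" and "(\<Sum>a<k. \<phi> a * cnj (\<phi> a)) = 1"
proof -
  have cphi: "cnj (\<phi> a) = (\<Sum>j<n. \<psi> j * cnj (M j a))" for a
    by (simp add: phi cnj_sum)
  have K1: "(\<Sum>a<k. M i a * cnj (\<phi> a)) = \<psi> i" if i: "i<n" for i
  proof -
    have "(\<Sum>a<k. M i a * cnj (\<phi> a)) = (\<Sum>a<k. \<Sum>j<n. \<psi> j * (M i a * cnj (M j a)))"
      by (simp add: cphi sum_distrib_left mult.assoc mult.left_commute)
    also have "\<dots> = (\<Sum>j<n. \<psi> j * (\<Sum>a<k. M i a * cnj (M j a)))"
      by (subst sum.swap) (simp add: sum_distrib_left)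
    also have "\<dots> = (\<Sum>j<n. \<psi> i * (\<psi> j * cnj (\<psi> j)))"
      by (rule sum.cong) (auto simp: pt i)
    also have "\<dots> = \<psi> i" by (simp add: sum_distrib_left[symmetric] unit)
    finally show ?thesis .
  qed
  have K1': "(\<Sum>a<k. \<phi> a * cnj (M i a)) = cnj (\<psi> i)" if i: "i<n" for i
  proof -
    have "cnj (\<Sum>a<k. M i a * cnj (\<phi> a)) = cnj (\<psi> i)" using K1[OF i] by simp
    then show ?thesis by (simp add: cnj_sum mult.commute)
  qed
  show K2: "(\<Sum>a<k. \<phi> a * cnj (\<phi> a)) = 1"
  proof -
    have "(\<Sum>a<k. \<phi> a * cnj (\<phi> a)) = (\<Sum>a<k. \<Sum>j<n. cnj (\<psi> j) * (M j a * cnj (\<phi> a)))"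
      by (simp add: phi sum_distrib_right mult.assoc)
    also have "\<dots> = (\<Sum>j<n. cnj (\<psi> j) * (\<Sum>a<k. M j a * cnj (\<phi> a)))"
      by (subst sum.swap) (simp add: sum_distrib_left)
    also have "\<dots> = (\<Sum>j<n. cnj (\<psi> j) * \<psi> j)"
      by (rule sum.cong) (auto simp: K1)
    also have "\<dots> = 1" using unit by (simp add: mult.commute)
    finally show ?thesis .
  qed
  fix i a assume i: "i<n" and a: "a<k"
  let ?z = "\<lambda>a. M i a - \<psi> i * \<phi> a"
  have "(\<Sum>a<k. ?z a * cnj (?z a)) = (\<Sum>a<k. M i a * cnj (M i a)) - cnj (\<psi> i) * (\<Sum>a<k. M i a * cnj (\<phi> a))
      - \<psi> i * (\<Sum>a<k. \<phi> a * cnj (M i a)) + \<psi> i * cnj (\<psi> i) * (\<Sum>a<k. \<phi> a * cnj (\<phi> a))"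
    by (simp add: algebra_simps sum_distrib_left sum.distrib sum_subtractf)
  also have "\<dots> = 0" using K1[OF i] K1'[OF i] K2 pt[OF i i] by simp
  finally have "(\<Sum>a<k. ?z a * cnj (?z a)) = 0" .
  from cnorm0[OF this a] show "M i a = \<psi> i * \<phi> a" by simp
qed

lemma mtrace_mult:
  assumes "A \<in> carrier_mat n m" "B \<in> carrier_mat m n"
  shows "mtrace (A * B) = (\<Sum>i<n. \<Sum>j<m. A $$ (i,j) * B $$ (j,i))"
  using assms by (simp add: mtrace_def scalar_prod_def atLeast0LessThan)

lemma trace_tensor:
  fixes A B :: "complex mat" and f :: "nat \<Rightarrow> complex"
  assumes A: "A \<in> carrier_mat n n" and B: "B \<in> carrier_mat n n"
    and f: "(\<Sum>a<k. f a * cnj (f a)) = 1"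
    and T: "\<And>X. T X = mat (n*k) (n*k) (\<lambda>(p,q). f (p mod k) * cnj (f (q mod k)) * X $$ (p div k, q div k))"
  shows "mtrace (T A * T B) = mtrace (A * B)"
proof -
  have k: "k > 0" using f by (cases k) auto
  have "mtrace (T A * T B) = (\<Sum>p<n*k. \<Sum>q<n*k. T A $$ (p,q) * T B $$ (q,p))"
    by (rule mtrace_mult) (auto simp: T)
  also have "\<dots> = (\<Sum>p<n*k. \<Sum>q<n*k. f (p mod k) * cnj (f (q mod k)) * A $$ (p div k, q div k)
       * (f (q mod k) * cnj (f (p mod k)) * B $$ (q div k, p div k)))"
    by (rule sum.cong[OF refl], rule sum.cong[OF refl]) (auto simp: T)
  also have "\<dots> = (\<Sum>i<n. \<Sum>a<k. \<Sum>j<n. \<Sum>b<k. f a * cnj (f b) * A $$ (i, j)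
       * (f b * cnj (f a) * B $$ (j, i)))"
    by (simp add: sum_split_nk k)
  also have "\<dots> = (\<Sum>i<n. \<Sum>j<n. A $$ (i,j) * B $$ (j,i) * ((\<Sum>a<k. f a * cnj (f a)) * (\<Sum>b<k. f b * cnj (f b))))"
  proof (rule sum.cong[OF refl])
    fix i
    show "(\<Sum>a<k. \<Sum>j<n. \<Sum>b<k. f a * cnj (f b) * A $$ (i, j) * (f b * cnj (f a) * B $$ (j, i)))
      = (\<Sum>j<n. A $$ (i,j) * B $$ (j,i) * ((\<Sum>a<k. f a * cnj (f a)) * (\<Sum>b<k. f b * cnj (f b))))"
      by (subst sum.swap) (simp add: sum_product sum_distrib_left mult.commute mult.left_commute)
  qed
  also have "\<dots> = mtrace (A * B)" using A B by (simp add: f mtrace_mult[OF A B])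
  finally show ?thesis .
qed

lemma idx_lt: "i < n \<Longrightarrow> a < k \<Longrightarrow> i * k + a < n * (k::nat)"
proof -
  assume "i < n" "a < k"
  then have "i*k + a < i*k + k" by simp
  also have "\<dots> = Suc i * k" by simp
  also have "\<dots> \<le> n * k" using \<open>i<n\<close> by (intro mult_right_mono) auto
  finally show ?thesis .
qed

lemma value_eq:
  assumes ch1: "linear_map_on n \<Phi>" and ch2: "linear_map_on n \<Psi>"
    and u: "unit_vector n \<psi>"
    and z: "unit_vector (n * k) \<zeta>" and pt: "ptrace_Z n k (proj \<zeta>) = proj \<psi>"
  shows "superfidelity (tensor_id n k \<Phi> (proj \<zeta>)) (tensor_id n k \<Psi> (proj \<zeta>))
       = superfidelity (\<Phi> (proj \<psi>)) (\<Psi> (proj \<psi>))"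
proof -
  have psi: "\<psi> \<in> carrier_vec n" and zc: "\<zeta> \<in> carrier_vec (n*k)" using u z by (auto simp: unit_vector_def)
  have unit: "(\<Sum>i<n. \<psi> $ i * cnj (\<psi> $ i)) = 1"
    using u psi by (simp add: unit_vector_def scalar_prod_def atLeast0LessThan)
  have ptij: "(\<Sum>a<k. \<zeta> $ (i*k+a) * cnj (\<zeta> $ (j*k+a))) = \<psi> $ i * cnj (\<psi> $ j)"
    if "i<n" "j<n" for i j
  proof -
    have "ptrace_Z n k (proj \<zeta>) $$ (i,j) = proj \<psi> $$ (i,j)" using pt by simp
    moreover have "ptrace_Z n k (proj \<zeta>) $$ (i,j) = (\<Sum>a<k. \<zeta> $ (i*k+a) * cnj (\<zeta> $ (j*k+a)))"
      using that zc by (auto simp: ptrace_Z_def proj_def idx_lt intro!: sum.cong)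
    moreover have "proj \<psi> $$ (i,j) = \<psi> $ i * cnj (\<psi> $ j)" using that psi by (simp add: proj_def)
    ultimately show ?thesis by simp
  qed
  define \<phi> where "\<phi> a = (\<Sum>j<n. cnj (\<psi> $ j) * \<zeta> $ (j*k+a))" for a
  have fac: "\<And>i a. i<n \<Longrightarrow> a<k \<Longrightarrow> \<zeta> $ (i*k+a) = \<psi> $ i * \<phi> a"
    and f1: "(\<Sum>a<k. \<phi> a * cnj (\<phi> a)) = 1"
    using factor[where M = "\<lambda>i a. \<zeta> $ (i*k+a)" and \<psi> = "\<lambda>i. \<psi> $ i", OF unit ptij \<phi>_def] by auto
  have k: "k > 0" using f1 by (cases k) auto
  define \<sigma> where "\<sigma> = proj \<psi>"
  have sc: "\<sigma> \<in> carrier_mat n n" using psi by (simp add: \<sigma>_def proj_def)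
  define T where "T X = mat (n*k) (n*k) (\<lambda>(p,q). \<phi> (p mod k) * cnj (\<phi> (q mod k)) * X $$ (p div k, q div k))" for X
  have blk: "blk n k (proj \<zeta>) a b = (\<phi> a * cnj (\<phi> b)) \<cdot>\<^sub>m \<sigma>" if "a<k" "b<k" for a b
    using that sc psi zc by (intro eq_matI) (auto simp: blk_def proj_def \<sigma>_def idx_lt fac)
  have tens: "tensor_id n k \<Theta> (proj \<zeta>) = T (\<Theta> \<sigma>)" if lin: "linear_map_on n \<Theta>" for \<Theta>
  proof -
    have sc2: "\<Theta> \<sigma> \<in> carrier_mat n n" and hom: "\<And>c. \<Theta> (c \<cdot>\<^sub>m \<sigma>) = c \<cdot>\<^sub>m \<Theta> \<sigma>"
      using lin sc by (auto simp: linear_map_on_def)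
    show ?thesis
    proof (rule eq_matI)
      fix p q assume p: "p < dim_row (T (\<Theta> \<sigma>))" and q: "q < dim_col (T (\<Theta> \<sigma>))"
      then have p': "p < n*k" and q': "q < n*k" by (auto simp: T_def)
      have pd: "p div k < n" "q div k < n" using p' q' by (auto simp: less_mult_imp_div_less)
      have pm: "p mod k < k" "q mod k < k" using k by auto
      show "tensor_id n k \<Theta> (proj \<zeta>) $$ (p, q) = T (\<Theta> \<sigma>) $$ (p, q)"
        using p' q' pd pm sc2 by (simp add: tensor_id_def T_def blk hom)
    qed (auto simp: tensor_id_def T_def)
  qed
  have A: "\<Phi> \<sigma> \<in> carrier_mat n n" and B: "\<Psi> \<sigma> \<in> carrier_mat n n"
    using ch1 ch2 sc by (auto simp: linear_map_on_def)
  note tt = trace_tensor[OF _ _ f1 T_def]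
  show ?thesis
    unfolding tens[OF ch1] tens[OF ch2] superfidelity_def \<sigma>_def[symmetric]
    using tt[OF A B] tt[OF A A] tt[OF B B] by simp
qed

theorem corollary3:
  fixes n :: nat and \<Phi> \<Psi> :: "complex mat \<Rightarrow> complex mat" and \<psi> :: "complex vec"
  assumes "quantum_channel n \<Phi>" and "quantum_channel n \<Psi>"
    and "unit_vector n \<psi>"
  shows "channel_superfidelity n \<Phi> \<Psi> (proj \<psi>) = superfidelity (\<Phi> (proj \<psi>)) (\<Psi> (proj \<psi>))"
proof -
  let ?S = "{(k, \<zeta>). unit_vector (n * k) \<zeta> \<and> ptrace_Z n k (proj \<zeta>) = proj \<psi>}"
  have l1: "linear_map_on n \<Phi>" and l2: "linear_map_on n \<Psi>"
    using assms by (auto simp: quantum_channel_def)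
  have psi: "\<psi> \<in> carrier_vec n" using assms(3) by (simp add: unit_vector_def)
  have "ptrace_Z n 1 (proj \<psi>) = proj \<psi>"
    using psi by (intro eq_matI) (auto simp: ptrace_Z_def proj_def)
  then have ne: "(1, \<psi>) \<in> ?S" using assms(3) by simp
  have "channel_superfidelity n \<Phi> \<Psi> (proj \<psi>) =
     (INF (k, \<zeta>) \<in> ?S. superfidelity (\<Phi> (proj \<psi>)) (\<Psi> (proj \<psi>)))"
    unfolding channel_superfidelity_def
    by (rule arg_cong[where f = Inf], rule image_cong[OF refl]) (auto intro!: value_eq[OF l1 l2 assms(3)])
  also have "\<dots> = superfidelity (\<Phi> (proj \<psi>)) (\<Psi> (proj \<psi>))"
  proof -
    have "?S \<noteq> {}" using ne by blast
    from cINF_const[OF this, of "superfidelity (\<Phi> (proj \<psi>)) (\<Psi> (proj \<psi>))"]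
    show ?thesis by (simp add: case_prod_unfold)
  qed
  finally show ?thesis .
qed

end
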